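(* Let $\mathcal P=\langle F,R\rangle$ be a program and $H$ a hypothesis. Let $IF(F,H)=\{A\mid F(A)\neq\mathcal U,\ H(A)\neq\mathcal U,\ F(A)\neq H(A)\}$, $PF_0=\emptyset$, and for $i\ge1$ $$PF_i=\{A\mid A\leftarrow B\in R \text{ and } B\not\equiv H(A)\text{ w.r.t. } F\oplus H_{/(\mathcal{HB}_{\mathcal P}\setminus IF(F,H))\setminus PF_{i-1}}\},$$ and let $PF=\bigcup_i PF_i$ (the limit of this increasing sequence). Then $$s^H_{\mathcal P}=H_{/(\mathcal{HB}_{\mathcal P}\setminus IF(F,H))\setminus PF}.$$
   Context: Let $\langle \mathcal{B},\le_t,\le_k\rangle$ be a complete, infinitely distributive bilattice with negation satisfying the infinitary interlacing conditions; $\wedge,\vee$ are meet/join for $\le_t$, $\otimes,\oplus$ meet/join for $\le_k$, $\mathcal U$ is the bottom of $\le_k$. A closed formula is built from ground literals and elements of $\mathcal B$ using $\wedge,\vee,\otimes,\oplus,\exists,\forall$ (quantifiers over closed terms). A program $\mathcal P=\langle F,R\rangle$ consists of a function $F$ from the Herbrand base $\mathcal{HB}_{\mathcal P}$ to $\mathcal B$ and a finite set $R$ of ground clauses $A\leftarrow B$, each ground atom being the head of at most one clause; $Head(\mathcal P)$ is the set of heads. An interpretation (hypothesis) is a function $\mathcal{HB}_{\mathcal P}\to\mathcal B$, extended to closed formulas homomorphically ($I(\neg A)=\neg I(A)$, $I(X\wedge Y)=I(X)\wedge I(Y)$ etc., $\exists$ as $\bigvee$, $\forall$ as $\bigwedge$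 over closed instances). Operations on interpretations are pointwise. $I,J$ are compatible if $I(A)\neq\mathcal U$ and $J(A)\neq\mathcal U$ imply $I(A)=J(A)$. $I\le J$ means $I(A)\neq\mathcal U\Rightarrow I(A)=J(A)$ for all $A$. $I_{/S}$ is $I$ on $S$ and $\mathcal U$ elsewhere. $B\equiv_I\alpha$ means $J(B)=\alpha$ for all $J$ with $I\le J$. $T_R(I)(A)=\alpha$ if there is a clause $A\leftarrow B$ in $R$ with $B\equiv_I\alpha$, and $\mathcal U$ otherwise. $H'$ is sound w.r.t. $\mathcal P$ if $F,H'$ are compatible and $H'_{/Head(\mathcal P)}\le T_R(F\oplus H')$. The support $s^H_{\mathcal P}$ is the maximal (w.r.t. $\le$) interpretation $H'\le H$ that is sound w.r.t. $\mathcal P$, i.e. $\bigoplus\{H'\mid H'\le H,\ H'\text{ sound}\}$. *)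

theory Defs
  imports Main
begin

record 'v bilat =
  tle :: "'v \<Rightarrow> 'v \<Rightarrow> bool"
  kle :: "'v \<Rightarrow> 'v \<Rightarrow> bool"
  bneg :: "'v \<Rightarrow> 'v"

definition is_lub :: "('v \<Rightarrow> 'v \<Rightarrow> bool) \<Rightarrow> 'v set \<Rightarrow> 'v \<Rightarrow> bool" where
  "is_lub r S x \<longleftrightarrow> (\<forall>y\<in>S. r y x) \<and> (\<forall>z. (\<forall>y\<in>S. r y z) \<longrightarrow> r x z)"

definition is_glb :: "('v \<Rightarrow> 'v \<Rightarrow> bool) \<Rightarrow> 'v set \<Rightarrow> 'v \<Rightarrow> bool" where
  "is_glb r S x \<longleftrightarrow> (\<forall>y\<in>S. r x y) \<and> (\<forall>z. (\<forall>y\<in>S. r z y) \<longrightarrow> r z x)"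

definition lub :: "('v \<Rightarrow> 'v \<Rightarrow> bool) \<Rightarrow> 'v set \<Rightarrow> 'v" where
  "lub r S = (THE x. is_lub r S x)"

definition glb :: "('v \<Rightarrow> 'v \<Rightarrow> bool) \<Rightarrow> 'v set \<Rightarrow> 'v" where
  "glb r S = (THE x. is_glb r S x)"

definition is_partial_order :: "('v \<Rightarrow> 'v \<Rightarrow> bool) \<Rightarrow> bool" where
  "is_partial_order r \<longleftrightarrow> (\<forall>x. r x x) \<and> (\<forall>x y. r x y \<and> r y x \<longrightarrow> x = y)
     \<and> (\<forall>x y z. r x y \<and> r y z \<longrightarrow> r x z)"

definition TSup :: "'v bilat \<Rightarrow> 'v set \<Rightarrow> 'v" where "TSup L S = lub (tle L) S"
definition TInf :: "'v bilat \<Rightarrow> 'v set \<Rightarrow> 'v" where "TInf L S = glb (tle L) S"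
definition KSup :: "'v bilat \<Rightarrow> 'v set \<Rightarrow> 'v" where "KSup L S = lub (kle L) S"
definition KInf :: "'v bilat \<Rightarrow> 'v set \<Rightarrow> 'v" where "KInf L S = glb (kle L) S"

definition bconj :: "'v bilat \<Rightarrow> 'v \<Rightarrow> 'v \<Rightarrow> 'v" where "bconj L x y = TInf L {x, y}"
definition bdisj :: "'v bilat \<Rightarrow> 'v \<Rightarrow> 'v \<Rightarrow> 'v" where "bdisj L x y = TSup L {x, y}"
definition btimes :: "'v bilat \<Rightarrow> 'v \<Rightarrow> 'v \<Rightarrow> 'v" where "btimes L x y = KInf L {x, y}"
definition bplus :: "'v bilat \<Rightarrow> 'v \<Rightarrow> 'v \<Rightarrow> 'v" where "bplus L x y = KSup L {x, y}"

definition bU :: "'v bilat \<Rightarrow> 'v" where "bU L = KSup L {}"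

text \<open>Families \<open>(a_i, b_i)_{i\<in>I}\<close> are represented
  by the set of pairs \<open>{(a_i,b_i)}\<close>.\<close>
definition bilattice :: "'v bilat \<Rightarrow> bool" where
  "bilattice L \<longleftrightarrow>
     is_partial_order (tle L) \<and> is_partial_order (kle L)
   \<comment> \<open>completeness\<close>
   \<and> (\<forall>S. (\<exists>x. is_lub (tle L) S x) \<and> (\<exists>x. is_glb (tle L) S x)
         \<and> (\<exists>x. is_lub (kle L) S x) \<and> (\<exists>x. is_glb (kle L) S x))
   \<comment> \<open>negation\<close>
   \<and> (\<forall>x y. tle L x y \<longrightarrow> tle L (bneg L y) (bneg L x))
   \<and> (\<forall>x y. kle L x y \<longrightarrow> kle L (bneg L x) (bneg L y))
   \<and> (\<forall>x. bneg L (bneg L x) = x)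
   \<comment> \<open>infinitary interlacing\<close>
   \<and> (\<forall>P :: ('v \<times> 'v) set. (\<forall>(a,b)\<in>P. tle L a b) \<longrightarrow>
          tle L (KInf L (fst ` P)) (KInf L (snd ` P)) \<and> tle L (KSup L (fst ` P)) (KSup L (snd ` P)))
   \<and> (\<forall>P :: ('v \<times> 'v) set. (\<forall>(a,b)\<in>P. kle L a b) \<longrightarrow>
          kle L (TInf L (fst ` P)) (TInf L (snd ` P)) \<and> kle L (TSup L (fst ` P)) (TSup L (snd ` P)))
   \<comment> \<open>infinite distributivity (over nonempty sets)\<close>
   \<and> (\<forall>x S. S \<noteq> {} \<longrightarrow>
        bconj L x (TSup L S) = TSup L (bconj L x ` S)
      \<and> bconj L x (KSup L S) = KSup L (bconj L x ` S)
      \<and> bconj L x (KInf L S) = KInf L (bconj L x ` S)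
      \<and> bdisj L x (TInf L S) = TInf L (bdisj L x ` S)
      \<and> bdisj L x (KSup L S) = KSup L (bdisj L x ` S)
      \<and> bdisj L x (KInf L S) = KInf L (bdisj L x ` S)
      \<and> btimes L x (KSup L S) = KSup L (btimes L x ` S)
      \<and> btimes L x (TSup L S) = TSup L (btimes L x ` S)
      \<and> btimes L x (TInf L S) = TInf L (btimes L x ` S)
      \<and> bplus L x (KInf L S) = KInf L (bplus L x ` S)
      \<and> bplus L x (TSup L S) = TSup L (bplus L x ` S)
      \<and> bplus L x (TInf L S) = TInf L (bplus L x ` S))"

text \<open>Ground atoms have type \<open>'a\<close> (the Herbrand base is \<open>UNIV :: 'a set\<close>),
  closed terms have type \<open>'t\<close>; quantifiers are represented by the family of their
  closed instances.\<close>
datatype ('a, 'v, 't) form =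
    PosLit 'a
  | NegLit 'a
  | Val 'v
  | FAnd "('a, 'v, 't) form" "('a, 'v, 't) form"
  | FOr "('a, 'v, 't) form" "('a, 'v, 't) form"
  | FTimes "('a, 'v, 't) form" "('a, 'v, 't) form"
  | FPlus "('a, 'v, 't) form" "('a, 'v, 't) form"
  | FEx "'t \<Rightarrow> ('a, 'v, 't) form"
  | FAll "'t \<Rightarrow> ('a, 'v, 't) form"

primrec eval :: "'v bilat \<Rightarrow> ('a \<Rightarrow> 'v) \<Rightarrow> ('a, 'v, 't) form \<Rightarrow> 'v" where
  "eval L I (PosLit A) = I A"
| "eval L I (NegLit A) = bneg L (I A)"
| "eval L I (Val v) = v"
| "eval L I (FAnd X Y) = bconj L (eval L I X) (eval L I Y)"
| "eval L I (FOr X Y) = bdisj L (eval L I X) (eval L I Y)"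
| "eval L I (FTimes X Y) = btimes L (eval L I X) (eval L I Y)"
| "eval L I (FPlus X Y) = bplus L (eval L I X) (eval L I Y)"
| "eval L I (FEx f) = TSup L (range (\<lambda>t. eval L I (f t)))"
| "eval L I (FAll f) = TInf L (range (\<lambda>t. eval L I (f t)))"

text \<open>A program is a pair \<open>(F, R)\<close>; \<open>R\<close> is a set of ground clauses \<open>(A, B)\<close> meaning \<open>A \<leftarrow> B\<close>.\<close>
definition wf_program :: "('a \<Rightarrow> 'v) \<Rightarrow> ('a \<times> ('a, 'v, 't) form) set \<Rightarrow> bool" where
  "wf_program F R \<longleftrightarrow> finite R \<and> (\<forall>A B B'. (A, B) \<in> R \<and> (A, B') \<in> R \<longrightarrow> B = B')"

definition Head :: "('a \<times> ('a, 'v, 't) form) set \<Rightarrow> 'a set" where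
  "Head R = fst ` R"

definition iplus :: "'v bilat \<Rightarrow> ('a \<Rightarrow> 'v) \<Rightarrow> ('a \<Rightarrow> 'v) \<Rightarrow> ('a \<Rightarrow> 'v)" where
  "iplus L I J = (\<lambda>A. bplus L (I A) (J A))"

definition iBigPlus :: "'v bilat \<Rightarrow> ('a \<Rightarrow> 'v) set \<Rightarrow> ('a \<Rightarrow> 'v)" where
  "iBigPlus L S = (\<lambda>A. KSup L ((\<lambda>I. I A) ` S))"

definition compatible :: "'v bilat \<Rightarrow> ('a \<Rightarrow> 'v) \<Rightarrow> ('a \<Rightarrow> 'v) \<Rightarrow> bool" where
  "compatible L I J \<longleftrightarrow> (\<forall>A. I A \<noteq> bU L \<and> J A \<noteq> bU L \<longrightarrow> I A = J A)"

definition ile :: "'v bilat \<Rightarrow> ('a \<Rightarrow> 'v) \<Rightarrow> ('a \<Rightarrow> 'v) \<Rightarrow> bool" where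
  "ile L I J \<longleftrightarrow> (\<forall>A. I A \<noteq> bU L \<longrightarrow> I A = J A)"

definition restr :: "'v bilat \<Rightarrow> ('a \<Rightarrow> 'v) \<Rightarrow> 'a set \<Rightarrow> ('a \<Rightarrow> 'v)" where
  "restr L I S = (\<lambda>A. if A \<in> S then I A else bU L)"

definition fequiv :: "'v bilat \<Rightarrow> ('a \<Rightarrow> 'v) \<Rightarrow> ('a, 'v, 't) form \<Rightarrow> 'v \<Rightarrow> bool" where
  "fequiv L I B \<alpha> \<longleftrightarrow> (\<forall>J. ile L I J \<longrightarrow> eval L J B = \<alpha>)"

definition T_R :: "'v bilat \<Rightarrow> ('a \<times> ('a, 'v, 't) form) set \<Rightarrow> ('a \<Rightarrow> 'v) \<Rightarrow> ('a \<Rightarrow> 'v)" where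
  "T_R L R I = (\<lambda>A. if (\<exists>B \<alpha>. (A, B) \<in> R \<and> fequiv L I B \<alpha>)
                    then (THE \<alpha>. \<exists>B. (A, B) \<in> R \<and> fequiv L I B \<alpha>) else bU L)"

definition sound :: "'v bilat \<Rightarrow> ('a \<Rightarrow> 'v) \<Rightarrow> ('a \<times> ('a, 'v, 't) form) set \<Rightarrow> ('a \<Rightarrow> 'v) \<Rightarrow> bool" where
  "sound L F R H' \<longleftrightarrow> compatible L F H' \<and> ile L (restr L H' (Head R)) (T_R L R (iplus L F H'))"

definition support :: "'v bilat \<Rightarrow> ('a \<Rightarrow> 'v) \<Rightarrow> ('a \<times> ('a, 'v, 't) form) set \<Rightarrow> ('a \<Rightarrow> 'v) \<Rightarrow> ('a \<Rightarrow> 'v)" where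
  "support L F R H = iBigPlus L {H'. ile L H' H \<and> sound L F R H'}"

definition IF :: "'v bilat \<Rightarrow> ('a \<Rightarrow> 'v) \<Rightarrow> ('a \<Rightarrow> 'v) \<Rightarrow> 'a set" where
  "IF L F H = {A. F A \<noteq> bU L \<and> H A \<noteq> bU L \<and> F A \<noteq> H A}"

primrec PFi :: "'v bilat \<Rightarrow> ('a \<Rightarrow> 'v) \<Rightarrow> ('a \<times> ('a, 'v, 't) form) set \<Rightarrow> ('a \<Rightarrow> 'v) \<Rightarrow> nat \<Rightarrow> 'a set" where
  "PFi L F R H 0 = {}"
| "PFi L F R H (Suc i) =
     {A. \<exists>B. (A, B) \<in> R \<and>
        \<not> fequiv L (iplus L F (restr L H ((UNIV - IF L F H) - PFi L F R H i))) B (H A)}"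

definition PF :: "'v bilat \<Rightarrow> ('a \<Rightarrow> 'v) \<Rightarrow> ('a \<times> ('a, 'v, 't) form) set \<Rightarrow> ('a \<Rightarrow> 'v) \<Rightarrow> 'a set" where
  "PF L F R H = (\<Union>i. PFi L F R H i)"

end

theory Submission
  imports Defs
begin

lemma lub_unique:
  assumes "is_partial_order r" "is_lub r S x"
  shows "lub r S = x"
  unfolding lub_def
proof (rule the_equality)
  show "is_lub r S x" by fact
  fix y assume "is_lub r S y"
  with assms show "y = x" unfolding is_lub_def is_partial_order_def by blast
qed

lemma bil_po: "bilattice L \<Longrightarrow> is_partial_order (kle L)"
  unfolding bilattice_def by (elim conjE) assumption

lemma bil_lub: "bilattice L \<Longrightarrow> \<exists>x. is_lub (kle L) S x"
proof -
  assume "bilattice L"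
  then have "\<forall>S. (\<exists>x. is_lub (tle L) S x) \<and> (\<exists>x. is_glb (tle L) S x)
         \<and> (\<exists>x. is_lub (kle L) S x) \<and> (\<exists>x. is_glb (kle L) S x)"
    unfolding bilattice_def by (elim conjE) assumption
  then show ?thesis by blast
qed

lemma bU_least:
  assumes "bilattice L"
  shows "kle L (bU L) z"
proof -
  have po: "is_partial_order (kle L)" using assms by (rule bil_po)
  obtain u where u: "is_lub (kle L) {} u" using bil_lub[OF assms] by blast
  have "bU L = u" unfolding bU_def KSup_def using lub_unique[OF po u] .
  then show ?thesis using u unfolding is_lub_def by auto
qed

lemma KSup_two:
  assumes "bilattice L" "S \<subseteq> {bU L, x}" "x \<in> S"
  shows "KSup L S = x"
proof -
  have po: "is_partial_order (kle L)" using assms(1) by (rule bil_po)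
  have "is_lub (kle L) S x"
    unfolding is_lub_def
  proof (intro conjI allI impI ballI)
    fix y assume "y \<in> S"
    then have "y = bU L \<or> y = x" using assms(2) by blast
    moreover have "kle L x x" using po unfolding is_partial_order_def by simp
    ultimately show "kle L y x" using bU_least[OF assms(1)] by auto
  next
    fix z assume "\<forall>y\<in>S. kle L y z"
    then show "kle L x z" using assms(3) by blast
  qed
  then show ?thesis unfolding KSup_def using lub_unique[OF po] by blast
qed

lemma bplus_U1: "bilattice L \<Longrightarrow> bplus L x (bU L) = x"
  unfolding bplus_def by (rule KSup_two) auto
lemma bplus_U2: "bilattice L \<Longrightarrow> bplus L (bU L) x = x"
  unfolding bplus_def by (rule KSup_two[where x=x]) auto
lemma bplus_same: "bilattice L \<Longrightarrow> bplus L x x = x"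
  unfolding bplus_def by (rule KSup_two[where x=x]) auto

lemma ile_trans: "ile L I J \<Longrightarrow> ile L J K \<Longrightarrow> ile L I K"
  unfolding ile_def by metis

lemma fequiv_mono: "ile L I I' \<Longrightarrow> fequiv L I B \<alpha> \<Longrightarrow> fequiv L I' B \<alpha>"
  unfolding fequiv_def using ile_trans by blast

lemma fequiv_eval: "fequiv L I B \<alpha> \<Longrightarrow> eval L I B = \<alpha>"
  unfolding fequiv_def ile_def by blast

lemma ile_iplus:
  assumes "bilattice L" "ile L H1 H2" "compatible L F H2"
  shows "ile L (iplus L F H1) (iplus L F H2)"
  unfolding ile_def iplus_def
proof (intro allI impI)
  fix A assume ne: "bplus L (F A) (H1 A) \<noteq> bU L"
  show "bplus L (F A) (H1 A) = bplus L (F A) (H2 A)"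
  proof (cases "H1 A = bU L")
    case False
    then show ?thesis using assms(2) unfolding ile_def by simp
  next
    case True
    then have FA: "F A \<noteq> bU L" using ne bplus_U1[OF assms(1)] by simp
    show ?thesis
    proof (cases "H2 A = bU L")
      case True
      then show ?thesis using \<open>H1 A = bU L\<close> by simp
    next
      case False
      then have "F A = H2 A" using FA assms(3) unfolding compatible_def by blast
      then show ?thesis using True bplus_U1[OF assms(1)] bplus_same[OF assms(1)] by simp
    qed
  qed
qed

lemma T_R_eq:
  assumes "wf_program F R" "(A, B) \<in> R" "fequiv L I B \<alpha>"
  shows "T_R L R I A = \<alpha>"
proof -
  have "(THE \<alpha>. \<exists>B. (A, B) \<in> R \<and> fequiv L I B \<alpha>) = \<alpha>"
  proof (rule the_equality)
    show "\<exists>B. (A, B) \<in> R \<and> fequiv L I B \<alpha>" using assms by blast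
    fix \<beta> assume "\<exists>B. (A, B) \<in> R \<and> fequiv L I B \<beta>"
    then obtain B' where "(A, B') \<in> R" "fequiv L I B' \<beta>" by blast
    then have "B' = B" using assms unfolding wf_program_def by blast
    then show "\<beta> = \<alpha>" using fequiv_eval \<open>fequiv L I B' \<beta>\<close> assms(3) by metis
  qed
  then show ?thesis unfolding T_R_def using assms by auto
qed

lemma T_R_ne:
  assumes "wf_program F R" "T_R L R I A \<noteq> bU L"
  shows "\<exists>B. (A, B) \<in> R \<and> fequiv L I B (T_R L R I A)"
proof -
  from assms(2) obtain B \<alpha> where "(A, B) \<in> R" "fequiv L I B \<alpha>"
    unfolding T_R_def by (auto split: if_splits)
  moreover then have "T_R L R I A = \<alpha>" using T_R_eq assms(1) by metis
  ultimately show ?thesis by blast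
qed

lemma compat_restr: "compatible L F (restr L H ((UNIV - IF L F H) - X))"
  unfolding compatible_def restr_def IF_def by auto

lemma ile_restr_mono: "X \<subseteq> Y \<Longrightarrow> ile L (restr L H X) (restr L H Y)"
  unfolding ile_def restr_def by auto

lemma PFi_mono_Suc:
  assumes "bilattice L"
  shows "PFi L F R H i \<subseteq> PFi L F R H (Suc i)"
proof (induction i)
  case 0 then show ?case by simp
next
  case (Suc i)
  have "ile L (iplus L F (restr L H ((UNIV - IF L F H) - PFi L F R H (Suc i))))
               (iplus L F (restr L H ((UNIV - IF L F H) - PFi L F R H i)))"
    by (rule ile_iplus[OF assms ile_restr_mono compat_restr]) (use Suc in blast)
  show ?case
  proof
    fix A assume "A \<in> PFi L F R H (Suc i)"
    then obtain B where B: "(A, B) \<in> R"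
      and nf: "\<not> fequiv L (iplus L F (restr L H ((UNIV - IF L F H) - PFi L F R H i))) B (H A)"
      by (simp only: PFi.simps(2) mem_Collect_eq) blast
    have "\<not> fequiv L (iplus L F (restr L H ((UNIV - IF L F H) - PFi L F R H (Suc i)))) B (H A)"
      using nf fequiv_mono[OF \<open>ile L _ _\<close>] by blast
    then show "A \<in> PFi L F R H (Suc (Suc i))" using B by (simp only: PFi.simps(2) mem_Collect_eq) blast
  qed
qed

lemma PFi_mono:
  assumes "bilattice L" "i \<le> j"
  shows "PFi L F R H i \<subseteq> PFi L F R H j"
  using lift_Suc_mono_le[of "PFi L F R H", OF PFi_mono_Suc[OF assms(1)] assms(2)] .

lemma PFi_Head: "PFi L F R H i \<subseteq> Head R"
  by (cases i) (auto simp: Head_def intro: rev_image_eqI)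

lemma PF_stable:
  assumes "bilattice L" "wf_program F R"
  shows "\<exists>n. PFi L F R H n = PF L F R H \<and> PFi L F R H (Suc n) = PF L F R H"
proof -
  have fin: "finite (PF L F R H)"
  proof (rule finite_subset)
    show "PF L F R H \<subseteq> Head R" unfolding PF_def by (rule UN_least, rule PFi_Head)
    show "finite (Head R)" using assms(2) unfolding wf_program_def Head_def by simp
  qed
  have "\<And>X. finite X \<Longrightarrow> X \<subseteq> PF L F R H \<Longrightarrow> \<exists>n. X \<subseteq> PFi L F R H n"
  proof -
    fix X assume "finite X" "X \<subseteq> PF L F R H"
    then show "\<exists>n. X \<subseteq> PFi L F R H n"
    proof (induction X rule: finite_induct)
      case empty then show ?case by blast
    next
      case (insert x X)
      then obtain n where n: "X \<subseteq> PFi L F R H n" by blast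
      obtain i where i: "x \<in> PFi L F R H i" using insert unfolding PF_def by blast
      have "X \<subseteq> PFi L F R H (max n i)" using n PFi_mono[OF assms(1), where i=n and j="max n i" and F=F and R=R and H=H] by auto
      moreover have "x \<in> PFi L F R H (max n i)" using i PFi_mono[OF assms(1), where i=i and j="max n i" and F=F and R=R and H=H] by auto
      ultimately show ?case by blast
    qed
  qed
  then obtain n where n: "PF L F R H \<subseteq> PFi L F R H n" using fin by blast
  have "PFi L F R H n \<subseteq> PF L F R H" "PFi L F R H (Suc n) \<subseteq> PF L F R H" unfolding PF_def by blast+
  then show ?thesis using n PFi_mono_Suc[OF assms(1), of F R H n] by blast
qed

theorem mainTheorem5:
  fixes L :: "'v bilat"
    and F :: "'a \<Rightarrow> 'v"
    and R :: "('a \<times> ('a, 'v, 't) form) set"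
    and H :: "'a \<Rightarrow> 'v"
  assumes "bilattice L"
    and "wf_program F R"
  shows "support L F R H = restr L H ((UNIV - IF L F H) - PF L F R H)"
proof -
  define K where "K = (UNIV - IF L F H) - PF L F R H"
  define HK where "HK = restr L H K"
  let ?S = "{H'. ile L H' H \<and> sound L F R H'}"
  have inK: "A \<in> K" if s: "ile L H' H" "sound L F R H'" and ne: "H' A \<noteq> bU L" for H' A
  proof -
    have comp: "compatible L F H'" and tr: "ile L (restr L H' (Head R)) (T_R L R (iplus L F H'))"
      using s(2) unfolding sound_def by auto
    have notIF: "A \<notin> IF L F H" if "H' A \<noteq> bU L" for A
      using that s(1) comp unfolding IF_def ile_def compatible_def by auto
    have "\<forall>A. H' A \<noteq> bU L \<longrightarrow> A \<notin> PFi L F R H i" for i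
    proof (induction i)
      case 0 then show ?case by simp
    next
      case (Suc i)
      have ile1: "ile L H' (restr L H ((UNIV - IF L F H) - PFi L F R H i))"
        using Suc notIF s(1) unfolding ile_def restr_def by auto
      have ile2: "ile L (iplus L F H') (iplus L F (restr L H ((UNIV - IF L F H) - PFi L F R H i)))"
        by (rule ile_iplus[OF assms(1) ile1 compat_restr])
      show ?case
      proof (intro allI impI notI)
        fix A assume neA: "H' A \<noteq> bU L" and inP: "A \<in> PFi L F R H (Suc i)"
        then obtain B where B: "(A, B) \<in> R"
          and nf: "\<not> fequiv L (iplus L F (restr L H ((UNIV - IF L F H) - PFi L F R H i))) B (H A)"
          by auto
        have hd: "A \<in> Head R" using B unfolding Head_def by force
        have eqH: "H' A = H A" using neA s(1) unfolding ile_def by blast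
        have "T_R L R (iplus L F H') A = H' A"
          using tr neA hd unfolding ile_def restr_def by metis
        then obtain B' where "(A, B') \<in> R" "fequiv L (iplus L F H') B' (H' A)"
          using T_R_ne[OF assms(2), of L "iplus L F H'" A] neA by auto
        moreover then have "B' = B" using B assms(2) unfolding wf_program_def by blast
        ultimately show False using nf fequiv_mono[OF ile2] eqH by metis
      qed
    qed
    then show ?thesis using notIF ne unfolding K_def PF_def by blast
  qed
  obtain n where n: "PFi L F R H n = PF L F R H" "PFi L F R H (Suc n) = PF L F R H"
    using PF_stable[OF assms] by blast
  have HKs: "HK \<in> ?S"
  proof -
    have "ile L HK H" unfolding HK_def ile_def restr_def by auto
    moreover have "compatible L F HK" unfolding HK_def K_def by (rule compat_restr)
    moreover have "ile L (restr L HK (Head R)) (T_R L R (iplus L F HK))"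
      unfolding ile_def
    proof (intro allI impI)
      fix A assume ne: "restr L HK (Head R) A \<noteq> bU L"
      then have hd: "A \<in> Head R" and AK: "A \<in> K" and val: "restr L HK (Head R) A = H A"
        unfolding restr_def HK_def by (auto split: if_splits)
      obtain B where B: "(A, B) \<in> R" using hd unfolding Head_def by force
      have "A \<notin> PFi L F R H (Suc n)" using AK n unfolding K_def by blast
      then have "fequiv L (iplus L F HK) B (H A)"
        using B n(1) unfolding HK_def K_def by auto
      then show "restr L HK (Head R) A = T_R L R (iplus L F HK) A"
        using T_R_eq[OF assms(2) B] val by metis
    qed
    ultimately show ?thesis unfolding sound_def by blast
  qed
  show ?thesis
  proof
    fix A
    have vals: "(\<lambda>I. I A) ` ?S \<subseteq> {bU L, restr L H K A}"
    proof
      fix v assume "v \<in> (\<lambda>I. I A) ` ?S"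
      then obtain H' where H': "H' \<in> ?S" "v = H' A" by blast
      show "v \<in> {bU L, restr L H K A}"
      proof (cases "H' A = bU L")
        case False
        then have "A \<in> K" "H' A = H A" using inK H' unfolding ile_def by blast+
        then show ?thesis using H' unfolding restr_def by simp
      qed (use H' in simp)
    qed
    have mem: "restr L H K A \<in> (\<lambda>I. I A) ` ?S" using HKs unfolding HK_def by blast
    show "support L F R H A = restr L H ((UNIV - IF L F H) - PF L F R H) A"
      unfolding support_def iBigPlus_def K_def[symmetric]
      by (rule KSup_two[OF assms(1) vals mem])
  qed
qed

end
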